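(* Let $0<\mu<L$, $\kappa=L/\mu$, and let $m(z)=z^n+\sum_{i=0}^{n-1}m_iz^i\in\mathbb{R}[z]$ be monic of degree $n\ge1$. Let $d(z)\in\mathbb{R}[z]$ with $\deg d<n$, and let $\rho>0$ be such that for every $\lambda\in[\mu,L]$ all roots of $m(z)-\lambda d(z)$ have modulus at most $\rho$. Then $$\rho\ \ge\ \max_{k=1,\dots,n}\Bigl(\frac{|m_{n-k}|}{\binom{n}{k}}\cdot\frac{\kappa-1}{\kappa+1}\Bigr)^{1/k}.$$
   Context: Here $m_{n-k}$ denotes the coefficient of $z^{n-k}$ in $m(z)$ (with $m_n=1$ implicitly for the leading coefficient, so that the $k=n$ term uses $m_0$). *)

theory Defs
  imports "HOL-Analysis.Analysis" "HOL-Computational_Algebra.Polynomial"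
begin

end

theory Submission
  imports Defs "HOL-Computational_Algebra.Fundamental_Theorem_Algebra"
begin

lemma vieta_bound:
  fixes \<rho> :: real
  assumes "0 \<le> \<rho>"
  shows "\<And>p :: complex poly. degree p = n \<Longrightarrow> lead_coeff p = 1 \<Longrightarrow>
     (\<forall>z. poly p z = 0 \<longrightarrow> cmod z \<le> \<rho>) \<Longrightarrow>
     cmod (coeff p j) \<le> real (n choose j) * \<rho> ^ (n - j)"
proof (induction n arbitrary: j)
  case 0
  then obtain a where "p = [:a:]" using degree0_coeffs by blast
  with 0 have "p = 1" by (simp add: one_pCons)
  then show ?case by (cases j) auto
next
  case (Suc n p)
  have "\<not> constant (poly p)"
    using Suc.prems(1) constant_degree by force
  then obtain r where r: "poly p r = 0"
    using fundamental_theorem_of_algebra by blast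
  then obtain q where pq: "p = [:-r, 1:] * q"
    using poly_eq_0_iff_dvd by (metis dvdE)
  have q0: "q \<noteq> 0" using pq Suc.prems(1) by auto
  have dq: "degree q = n"
  proof -
    have A: "degree ([:-r, 1:] * q) = Suc (degree q)"
      using q0 by (subst degree_mult_eq) auto
    have B: "degree ([:-r, 1:] * q) = Suc n"
      using Suc.prems(1) by (simp only: pq)
    from A B show ?thesis by linarith
  qed
  have lq: "lead_coeff q = 1"
  proof -
    have A: "lead_coeff ([:-r, 1:] * q) = lead_coeff q"
      by (subst lead_coeff_mult) simp
    have B: "lead_coeff ([:-r, 1:] * q) = 1"
      using Suc.prems(2) by (simp only: pq)
    from A B show ?thesis by simp
  qed
  have rq: "\<forall>z. poly q z = 0 \<longrightarrow> cmod z \<le> \<rho>"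
    using Suc.prems(3) pq by auto
  have rr: "cmod r \<le> \<rho>" using Suc.prems(3) r by auto
  have IH: "\<And>i. cmod (coeff q i) \<le> real (n choose i) * \<rho> ^ (n - i)"
    using Suc.IH dq lq rq by blast
  have pe: "p = pCons 0 q - smult r q"
    using pq by (simp add: algebra_simps)
  show ?case
  proof (cases j)
    case 0
    have "cmod (coeff p j) = cmod r * cmod (coeff q 0)"
      using 0 pe by (simp add: norm_mult)
    also have "\<dots> \<le> \<rho> * (real (n choose 0) * \<rho> ^ (n - 0))"
      using IH[of 0] rr assms by (intro mult_mono) auto
    also have "\<dots> = real (Suc n choose j) * \<rho> ^ (Suc n - j)"
      using 0 by simp
    finally show ?thesis .
  next
    case (Suc i)
    have "cmod (coeff p j) = cmod (coeff q i - r * coeff q j)"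
      using Suc pe by simp
    also have "\<dots> \<le> cmod (coeff q i) + cmod r * cmod (coeff q j)"
      by (metis norm_mult norm_triangle_ineq4)
    also have "\<dots> \<le> real (n choose i) * \<rho> ^ (n - i) + \<rho> * (real (n choose j) * \<rho> ^ (n - j))"
      using IH[of i] IH[of j] rr assms by (intro add_mono mult_mono) auto
    also have "\<dots> = real (Suc n choose j) * \<rho> ^ (Suc n - j)"
    proof (cases "j \<le> n")
      case True
      then have E1: "\<rho> * \<rho> ^ (n - j) = \<rho> ^ (Suc n - j)"
        by (simp add: Suc_diff_le)
      have E2: "n - i = Suc n - j" using Suc by simp
      have E3: "real (Suc n choose j) = real (n choose i) + real (n choose j)"
        using Suc by simp
      have "real (n choose i) * \<rho> ^ (n - i) + \<rho> * (real (n choose j) * \<rho> ^ (n - j))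
          = real (n choose i) * \<rho> ^ (Suc n - j) + real (n choose j) * \<rho> ^ (Suc n - j)"
        by (metis E1 E2 mult.left_commute)
      also have "\<dots> = (real (n choose i) + real (n choose j)) * \<rho> ^ (Suc n - j)"
        by (simp only: distrib_right)
      finally show ?thesis by (simp only: E3)
    next
      case False
      then have "i = n \<or> n < i" using Suc by linarith
      then show ?thesis using Suc by auto
    qed
    finally show ?thesis .
  qed
qed

lemma minmax_bound:
  fixes a b \<mu> L M :: real
  assumes "0 < \<mu>" "\<mu> < L" "\<bar>a - \<mu> * b\<bar> \<le> M" "\<bar>a - L * b\<bar> \<le> M"
  shows "\<bar>a\<bar> * ((L / \<mu> - 1) / (L / \<mu> + 1)) \<le> M"
proof -
  have e: "(L / \<mu> - 1) / (L / \<mu> + 1) = (L - \<mu>) / (L + \<mu>)"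
  proof -
    have "L / \<mu> - 1 = (L - \<mu>) / \<mu>" "L / \<mu> + 1 = (L + \<mu>) / \<mu>"
      using assms(1) by (simp_all add: field_simps)
    moreover have "((L - \<mu>) / \<mu>) / ((L + \<mu>) / \<mu>) = (L - \<mu>) / (L + \<mu>)"
      using assms(1) by simp
    ultimately show ?thesis by (simp only:)
  qed
  have eq: "(L - \<mu>) * a = L * (a - \<mu> * b) - \<mu> * (a - L * b)" by (simp add: algebra_simps)
  have "(L - \<mu>) * \<bar>a\<bar> = \<bar>(L - \<mu>) * a\<bar>" using assms by (simp add: abs_mult)
  also have "\<dots> = \<bar>L * (a - \<mu> * b) - \<mu> * (a - L * b)\<bar>" using eq by simp
  also have "\<dots> \<le> \<bar>L * (a - \<mu> * b)\<bar> + \<bar>\<mu> * (a - L * b)\<bar>" by (rule abs_triangle_ineq4)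
  also have "\<dots> = L * \<bar>a - \<mu> * b\<bar> + \<mu> * \<bar>a - L * b\<bar>" using assms by (simp add: abs_mult)
  also have "\<dots> \<le> L * M + \<mu> * M"
    using assms by (intro add_mono mult_left_mono) auto
  also have "\<dots> = (L + \<mu>) * M" by (simp add: distrib_right)
  finally have F: "(L - \<mu>) * \<bar>a\<bar> \<le> (L + \<mu>) * M" .
  have "\<bar>a\<bar> * ((L - \<mu>) / (L + \<mu>)) = ((L - \<mu>) * \<bar>a\<bar>) / (L + \<mu>)" by simp
  also have "\<dots> \<le> M" using F assms by (simp add: pos_divide_le_eq mult.commute)
  finally show ?thesis unfolding e .
qed

lemma div_le_helper: "(0::real) < C \<Longrightarrow> A \<le> C * R \<Longrightarrow> A / C \<le> R"
  by (simp add: pos_divide_le_eq mult.commute)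

theorem mainTheorem5:
  fixes \<mu> L \<rho> :: real and m d :: "real poly" and n :: nat
  assumes "0 < \<mu>" and "\<mu> < L"
    and "n \<ge> 1" and "degree m = n" and "lead_coeff m = 1"
    and "degree d < n"
    and "0 < \<rho>"
    and "\<forall>lam\<in>{\<mu>..L}. \<forall>z::complex.
           poly (map_poly complex_of_real (m - smult lam d)) z = 0 \<longrightarrow> cmod z \<le> \<rho>"
  shows "\<rho> \<ge> Max ((\<lambda>k. (\<bar>coeff m (n - k)\<bar> / real (n choose k)
                 * ((L / \<mu> - 1) / (L / \<mu> + 1))) powr (1 / real k)) ` {1..n})"
proof -
  have cb: "\<bar>coeff m j - lam * coeff d j\<bar> \<le> real (n choose j) * \<rho> ^ (n - j)"
    if lam: "lam \<in> {\<mu>..L}" for lam j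
  proof -
    let ?q = "m - smult lam d"
    have dsd: "degree (smult lam d) < n" using assms(6) by simp
    have dq: "degree ?q = n"
      using assms(4) dsd unfolding diff_conv_add_uminus by (subst degree_add_eq_left) (simp_all only: degree_minus)
    have lq: "lead_coeff ?q = 1"
    proof -
      have "coeff d n = 0" using assms(6) by (simp add: coeff_eq_0)
      then show ?thesis using dq assms(4,5) by simp
    qed
    let ?p = "map_poly complex_of_real ?q"
    have dp: "degree ?p = n" using dq by (subst degree_map_poly) auto
    moreover have "lead_coeff ?p = 1"
    proof -
      have X: "coeff ?p n = complex_of_real (coeff ?q n)" by (simp add: coeff_map_poly)
      have Y: "coeff ?q n = 1" using lq by (simp only: dq)
      show ?thesis unfolding dp X Y by simp
    qed
    moreover have "\<forall>z. poly ?p z = 0 \<longrightarrow> cmod z \<le> \<rho>" using assms(8) lam by blast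
    moreover have "0 \<le> \<rho>" using assms(7) by simp
    ultimately have "cmod (coeff ?p j) \<le> real (n choose j) * \<rho> ^ (n - j)"
      using vieta_bound by blast
    moreover have "coeff ?p j = complex_of_real (coeff m j - lam * coeff d j)"
      by (simp add: coeff_map_poly)
    ultimately show ?thesis by (simp only: norm_of_real)
  qed
  let ?S = "(\<lambda>k. (\<bar>coeff m (n - k)\<bar> / real (n choose k)
                 * ((L / \<mu> - 1) / (L / \<mu> + 1))) powr (1 / real k)) ` {1..n}"
  have fin: "finite ?S" by blast
  have ne: "?S \<noteq> {}" using assms(3) by auto
  show ?thesis
  proof (rule Max.boundedI[OF fin ne])
    fix y assume "y \<in> (\<lambda>k. (\<bar>coeff m (n - k)\<bar> / real (n choose k)
                 * ((L / \<mu> - 1) / (L / \<mu> + 1))) powr (1 / real k)) ` {1..n}"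
    then obtain k where k: "k \<in> {1..n}" and y: "y = (\<bar>coeff m (n - k)\<bar> / real (n choose k)
                 * ((L / \<mu> - 1) / (L / \<mu> + 1))) powr (1 / real k)" by auto
    have nk: "n choose (n - k) = n choose k" using k by (metis atLeastAtMost_iff binomial_symmetric)
    have nk2: "n - (n - k) = k" using k by simp
    have cpos: "real (n choose k) > 0" using k by simp
    have b1: "\<bar>coeff m (n - k) - \<mu> * coeff d (n - k)\<bar> \<le> real (n choose k) * \<rho> ^ k"
      using cb[of \<mu> "n - k"] assms(1,2) nk nk2 by simp
    have b2: "\<bar>coeff m (n - k) - L * coeff d (n - k)\<bar> \<le> real (n choose k) * \<rho> ^ k"
      using cb[of L "n - k"] assms(1,2) nk nk2 by simp
    have "\<bar>coeff m (n - k)\<bar> * ((L / \<mu> - 1) / (L / \<mu> + 1)) \<le> real (n choose k) * \<rho> ^ k"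
      using minmax_bound[OF assms(1,2) b1 b2] .
    then have X: "\<bar>coeff m (n - k)\<bar> / real (n choose k) * ((L / \<mu> - 1) / (L / \<mu> + 1)) \<le> \<rho> ^ k"
    proof -
      have "\<bar>coeff m (n - k)\<bar> / real (n choose k) * ((L / \<mu> - 1) / (L / \<mu> + 1))
          = (\<bar>coeff m (n - k)\<bar> * ((L / \<mu> - 1) / (L / \<mu> + 1))) / real (n choose k)"
        by simp
      also have "\<dots> \<le> \<rho> ^ k" using cpos \<open>\<bar>coeff m (n - k)\<bar> * ((L / \<mu> - 1) / (L / \<mu> + 1)) \<le> real (n choose k) * \<rho> ^ k\<close>
        by (rule div_le_helper)
      finally show ?thesis .
    qed
    have fpos: "(L / \<mu> - 1) / (L / \<mu> + 1) \<ge> 0"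
      using assms(1,2) by (simp add: field_simps)
    have nn: "0 \<le> \<bar>coeff m (n - k)\<bar> / real (n choose k) * ((L / \<mu> - 1) / (L / \<mu> + 1))"
      by (intro mult_nonneg_nonneg divide_nonneg_nonneg fpos) auto
    have "y \<le> (\<rho> ^ k) powr (1 / real k)"
      unfolding y by (rule powr_mono2) (simp, rule nn, rule X)
    also have "\<dots> = \<rho>"
    proof -
      have "\<rho> ^ k = \<rho> powr (real k)" using assms(7) by (simp add: powr_realpow)
      then have "(\<rho> ^ k) powr (1 / real k) = \<rho> powr (real k * (1 / real k))"
        by (simp add: powr_powr)
      also have "real k * (1 / real k) = 1" using k by simp
      finally show ?thesis using assms(7) by simp
    qed
    finally show "y \<le> \<rho>" .
  qed
qed

end
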